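(* Let $m\ge1$, $r\ge0$ be integers and $S_m(r)=S_m(r,r)$. Then $$\mathrm{vol}(S_m^{\rm cube}(r))=\sum_{j=0}^{\min\{m,r\}}\binom mj\binom rj\binom{r+m-j}{m-j},\qquad \mathrm{vol}(S_m^{\rm conv}(r))=\frac{r^m}{m!}\binom{2m}{m},$$ and for every fixed $m\ge1$, $\lim_{r\to\infty}\mathrm{vol}(S^{\rm conv}_m(r))/\mathrm{vol}(S^{\rm cube}_m(r))=1$.
   Context: $S_m(r^+,r^-)=\{\mathbf x\in\mathbb Z^m:\sum_{i:x_i>0}x_i\le r^+,\ \sum_{i:x_i<0}|x_i|\le r^-\}$; $S_m(r,r)$ is the ball of radius $r$ around $\mathbf 0$ in $(\mathbb Z^m,d_a)$, where $d_a(\mathbf x,\mathbf y)=\max\{\sum_{i:x_i>y_i}(x_i-y_i),\sum_{i:x_i<y_i}(y_i-x_i)\}$. For $S\subset\mathbb Z^m$, $S^{\rm cube}=\bigcup_{\mathbf y\in S}(\mathbf y+[-1/2,1/2]^m)\subset\mathbb R^m$ and $S^{\rm conv}$ is the convex hull of $S$ in $\mathbb R^m$; vol is Lebesgue measure. *)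

theory Defs
  imports "HOL-Analysis.Analysis"
begin

text \<open>Lattice points of Z^m are represented as vectors in real^'n (m = CARD('n))
  all of whose coordinates are integers.\<close>

definition S_set :: "real \<Rightarrow> real \<Rightarrow> (real^'n) set" where
  "S_set rp rm = {x. (\<forall>i. x $ i \<in> \<int>) \<and>
      (\<Sum>i\<in>{i. x $ i > 0}. x $ i) \<le> rp \<and>
      (\<Sum>i\<in>{i. x $ i < 0}. \<bar>x $ i\<bar>) \<le> rm}"

definition S_ball :: "nat \<Rightarrow> (real^'n) set" where
  "S_ball r = S_set (real r) (real r)"

definition cube_set :: "(real^'n) set \<Rightarrow> (real^'n) set" where
  "cube_set S = (\<Union>y\<in>S. cbox (y - (\<chi> i. 1/2)) (y + (\<chi> i. 1/2)))"

definition conv_set :: "(real^'n) set \<Rightarrow> (real^'n) set" where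
  "conv_set S = convex hull S"

end

theory Submission
  imports Defs
begin


definition Vset :: "'a set \<Rightarrow> nat \<Rightarrow> ('a \<Rightarrow> nat) set" where
  "Vset K b = {v. (\<forall>i. i \<notin> K \<longrightarrow> v i = 0) \<and> sum v K \<le> b}"

lemma sum_rev_choose: "(\<Sum>t\<le>b. (b - t + k) choose k) = (b + k + 1) choose (k + 1)"
proof -
  have "(\<Sum>t\<le>b. (b - t + k) choose k) = (\<Sum>t\<le>b. (k + t) choose t)"
  proof -
    have "(\<Sum>t\<le>b. (b - t + k) choose k) = (\<Sum>t=0..b. (b - t + k) choose k)"
      by (simp add: atMost_atLeast0)
    also have "\<dots> = (\<Sum>t=0..b. (b - (b + 0 - t) + k) choose k)"
      by (subst sum.atLeastAtMost_rev) simp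
    also have "\<dots> = (\<Sum>t=0..b. (k + t) choose t)"
    proof (intro sum.cong refl)
      fix t assume "t \<in> {0..b}"
      then have "b - (b + 0 - t) + k = k + t" by simp
      then show "(b - (b + 0 - t) + k) choose k = (k + t) choose t"
        using binomial_symmetric[of t "k+t"] by (simp add: add.commute)
    qed
    finally show ?thesis by (simp add: atMost_atLeast0)
  qed
  also have "\<dots> = Suc (k + b) choose b" by (rule sum_choose_lower)
  also have "\<dots> = (b + k + 1) choose (k + 1)"
    using binomial_symmetric[of b "Suc (k+b)"] by (simp add: add.commute)
  finally show ?thesis .
qed

lemma Vset_count: "finite K \<Longrightarrow> finite (Vset K b) \<and> card (Vset K b) = (b + card K) choose card K"
proof (induction K arbitrary: b rule: finite_induct)
  case empty
  have "Vset {} b = {\<lambda>_. 0}" by (auto simp: Vset_def)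
  then show ?case unfolding \<open>Vset {} b = {\<lambda>_. 0}\<close> by simp
next
  case (insert i K)
  have eq: "Vset (insert i K) b = (\<Union>t\<in>{..b}. (\<lambda>v. v(i:=t)) ` Vset K (b - t))"
  proof (intro equalityI subsetI)
    fix v assume v: "v \<in> Vset (insert i K) b"
    define w where "w = v(i:=0)"
    have "sum w K = sum v K" unfolding w_def using insert.hyps by (intro sum.cong) auto
    moreover have "sum v (insert i K) = v i + sum v K" using insert.hyps by simp
    ultimately have "w \<in> Vset K (b - v i)" using v unfolding Vset_def w_def by auto
    moreover have "v = w(i := v i)" unfolding w_def by auto
    moreover have "v i \<le> b" using v \<open>sum v (insert i K) = v i + sum v K\<close> unfolding Vset_def by auto
    ultimately show "v \<in> (\<Union>t\<in>{..b}. (\<lambda>v. v(i:=t)) ` Vset K (b - t))" by blast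
  next
    fix v assume "v \<in> (\<Union>t\<in>{..b}. (\<lambda>v. v(i:=t)) ` Vset K (b - t))"
    then obtain t w where t: "t \<le> b" and w: "w \<in> Vset K (b - t)" and vw: "v = w(i:=t)" by auto
    have "sum v K = sum w K" unfolding vw using insert.hyps by (intro sum.cong) auto
    moreover have "sum v (insert i K) = t + sum v K" using insert.hyps vw by simp
    ultimately show "v \<in> Vset (insert i K) b" using w t vw unfolding Vset_def by auto
  qed
  have inj: "inj_on (\<lambda>v. v(i:=t)) (Vset K c)" for t c
  proof (rule inj_onI)
    fix v w assume "v \<in> Vset K c" "w \<in> Vset K c" "v(i:=t) = w(i:=t)"
    then have "v i = 0" "w i = 0" using insert.hyps unfolding Vset_def by auto
    show "v = w"
    proof
      fix x show "v x = w x"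
      proof (cases "x = i")
        case True then show ?thesis using \<open>v i = 0\<close> \<open>w i = 0\<close> by simp
      next
        case False then show ?thesis using fun_cong[OF \<open>v(i:=t) = w(i:=t)\<close>, of x] by simp
      qed
    qed
  qed
  have fin: "finite ((\<lambda>v. v(i:=t)) ` Vset K (b - t))" for t using insert.IH by blast
  have disj: "\<forall>s\<in>{..b}. \<forall>t\<in>{..b}. s \<noteq> t \<longrightarrow>
      (\<lambda>v. v(i:=s)) ` Vset K (b - s) \<inter> (\<lambda>v. v(i:=t)) ` Vset K (b - t) = {}"
  proof (intro ballI impI)
    fix s t :: nat assume "s \<noteq> t"
    show "(\<lambda>v. v(i:=s)) ` Vset K (b - s) \<inter> (\<lambda>v. v(i:=t)) ` Vset K (b - t) = {}"
    proof (rule ccontr)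
      assume "\<not> ?thesis"
      then obtain v w where "v(i:=s) = w(i:=t)" by blast
      from fun_cong[OF this, of i] \<open>s \<noteq> t\<close> show False by simp
    qed
  qed
  have "card (Vset (insert i K) b) = (\<Sum>t\<le>b. card ((\<lambda>v. v(i:=t)) ` Vset K (b - t)))"
    unfolding eq by (rule card_UN_disjoint) (use fin disj in auto)
  also have "\<dots> = (\<Sum>t\<le>b. (b - t + card K) choose card K)"
    by (intro sum.cong refl) (simp add: card_image[OF inj] insert.IH)
  also have "\<dots> = (b + card (insert i K)) choose card (insert i K)"
    using sum_rev_choose insert.hyps by simp
  finally show ?case using eq fin by auto
qed



definition Pset :: "'a set \<Rightarrow> nat \<Rightarrow> ('a \<Rightarrow> nat) set" where
  "Pset J a = {u. (\<forall>i. i \<notin> J \<longrightarrow> u i = 0) \<and> (\<forall>i\<in>J. 1 \<le> u i) \<and> sum u J \<le> a}"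

lemma sum_minus_one:
  assumes "\<forall>i\<in>J. (1::nat) \<le> u i" "finite J"
  shows "sum u J = sum (\<lambda>i. u i - 1) J + card J"
proof -
  have "sum u J = sum (\<lambda>i. (u i - 1) + 1) J" using assms by (intro sum.cong) auto
  also have "\<dots> = sum (\<lambda>i. u i - 1) J + card J" by (subst sum.distrib) simp
  finally show ?thesis .
qed

lemma Pset_count:
  assumes "finite J"
  shows "finite (Pset J a) \<and> card (Pset J a) = a choose card J"
proof (cases "card J \<le> a")
  case True
  have hb: "bij_betw (\<lambda>u i. if i \<in> J then u i - 1 else 0) (Pset J a) (Vset J (a - card J))"
  proof (rule bij_betw_byWitness[where f'="\<lambda>v i. if i \<in> J then v i + 1 else 0"])
    show "\<forall>u\<in>Pset J a. (\<lambda>i. if i \<in> J then (if i \<in> J then u i - 1 else 0) + 1 else 0) = u"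
    proof
      fix u assume u: "u \<in> Pset J a"
      show "(\<lambda>i. if i \<in> J then (if i \<in> J then u i - 1 else 0) + 1 else 0) = u"
      proof
        fix i show "(if i \<in> J then (if i \<in> J then u i - 1 else 0) + 1 else 0) = u i"
          using u unfolding Pset_def by (cases "i \<in> J") auto
      qed
    qed
    show "\<forall>v\<in>Vset J (a - card J). (\<lambda>i. if i \<in> J then (if i \<in> J then v i + 1 else 0) - 1 else 0) = v"
      unfolding Vset_def by (auto intro!: ext)
    show "(\<lambda>u i. if i \<in> J then u i - 1 else 0) ` Pset J a \<subseteq> Vset J (a - card J)"
    proof
      fix w assume "w \<in> (\<lambda>u i. if i \<in> J then u i - 1 else 0) ` Pset J a"
      then obtain u where u: "u \<in> Pset J a" and w: "w = (\<lambda>i. if i \<in> J then u i - 1 else 0)" by auto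
      have "sum w J = sum (\<lambda>i. u i - 1) J" unfolding w by (intro sum.cong) auto
      moreover have "sum u J = sum (\<lambda>i. u i - 1) J + card J"
        using u assms sum_minus_one unfolding Pset_def by blast
      ultimately show "w \<in> Vset J (a - card J)" using u unfolding Vset_def Pset_def w by auto
    qed
    show "(\<lambda>v i. if i \<in> J then v i + 1 else 0) ` Vset J (a - card J) \<subseteq> Pset J a"
    proof
      fix w assume "w \<in> (\<lambda>v i. if i \<in> J then v i + 1 else 0) ` Vset J (a - card J)"
      then obtain v where v: "v \<in> Vset J (a - card J)" and w: "w = (\<lambda>i. if i \<in> J then v i + 1 else 0)" by auto
      have "sum w J = sum (\<lambda>i. v i + 1) J" unfolding w by (intro sum.cong) auto
      also have "\<dots> = sum v J + card J" by (subst sum.distrib) simp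
      finally show "w \<in> Pset J a" using v True unfolding Vset_def Pset_def w by auto
    qed
  qed
  have "finite (Vset J (a - card J)) \<and> card (Vset J (a - card J)) = a choose card J"
    using Vset_count[OF assms, of "a - card J"] True by simp
  then show ?thesis using bij_betw_finite[OF hb] bij_betw_same_card[OF hb] by simp
next
  case False
  have "Pset J a = {}"
  proof (rule ccontr)
    assume "Pset J a \<noteq> {}"
    then obtain u where u: "u \<in> Pset J a" by auto
    have "card J = sum (\<lambda>i. 1::nat) J" by simp
    also have "\<dots> \<le> sum u J" using u unfolding Pset_def by (intro sum_mono) auto
    also have "\<dots> \<le> a" using u unfolding Pset_def by auto
    finally show False using False by simp
  qed
  then show ?thesis using False by simp
qed

definition Tset :: "nat \<Rightarrow> nat \<Rightarrow> ('n::finite \<Rightarrow> int) set" where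
  "Tset a b = {f. (\<Sum>i\<in>UNIV. nat (f i)) \<le> a \<and> (\<Sum>i\<in>UNIV. nat (- f i)) \<le> b}"

definition gmap :: "'n set \<Rightarrow> ('n \<Rightarrow> nat) \<times> ('n \<Rightarrow> nat) \<Rightarrow> ('n \<Rightarrow> int)" where
  "gmap J p = (\<lambda>i. if i \<in> J then int (fst p i) else - int (snd p i))"

lemma gmap_nat:
  assumes "p \<in> Pset J a \<times> Vset (-J) b"
  shows "(\<lambda>i. nat (gmap J p i)) = fst p" "(\<lambda>i. nat (- gmap J p i)) = snd p"
    "{i. gmap J p i > 0} = J"
  using assms unfolding gmap_def Pset_def Vset_def by (auto intro!: ext)

lemma sum_support_UNIV:
  fixes u :: "'n::finite \<Rightarrow> nat"
  assumes "\<forall>i. i \<notin> J \<longrightarrow> u i = 0"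
  shows "sum u J = sum u UNIV"
  by (rule sum.mono_neutral_left) (use assms in auto)

lemma card_Compl_finite: "card (- (J::'n::finite set)) = CARD('n) - card J"
  by (simp add: Compl_eq_Diff_UNIV card_Diff_subset)

lemma Tset_eq: "(Tset a b :: ('n::finite \<Rightarrow> int) set) = (\<Union>J\<in>UNIV. gmap J ` (Pset J a \<times> Vset (-J) b))"
proof (intro equalityI subsetI)
  fix f :: "'n::finite \<Rightarrow> int" assume f: "f \<in> Tset a b"
  define J where "J = {i. f i > 0}"
  define p where "p = ((\<lambda>i. nat (f i)), (\<lambda>i. nat (- f i)))"
  have "sum (fst p) J = sum (fst p) UNIV" by (rule sum_support_UNIV) (auto simp: p_def J_def)
  moreover have "sum (snd p) (-J) = sum (snd p) UNIV" by (rule sum_support_UNIV) (auto simp: p_def J_def)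
  ultimately have "p \<in> Pset J a \<times> Vset (-J) b"
    using f unfolding Pset_def Vset_def Tset_def by (auto simp: p_def J_def)
  moreover have "gmap J p = f" unfolding gmap_def p_def J_def by (auto intro!: ext)
  ultimately show "f \<in> (\<Union>J\<in>UNIV. gmap J ` (Pset J a \<times> Vset (-J) b))" by blast
next
  fix f :: "'n::finite \<Rightarrow> int" assume "f \<in> (\<Union>J\<in>UNIV. gmap J ` (Pset J a \<times> Vset (-J) b))"
  then obtain J p where p: "p \<in> Pset J a \<times> Vset (-J) b" and f: "f = gmap J p" by auto
  have "sum (fst p) J = sum (fst p) UNIV" by (rule sum_support_UNIV) (use p in \<open>auto simp: Pset_def\<close>)
  moreover have "sum (snd p) (-J) = sum (snd p) UNIV" by (rule sum_support_UNIV) (use p in \<open>auto simp: Vset_def\<close>)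
  moreover have "(\<Sum>i\<in>UNIV. nat (f i)) = sum (fst p) UNIV"
    using gmap_nat(1)[OF p] unfolding f by metis
  moreover have "(\<Sum>i\<in>UNIV. nat (- f i)) = sum (snd p) UNIV"
    using gmap_nat(2)[OF p] unfolding f by metis
  ultimately show "f \<in> Tset a b" using p unfolding Tset_def Pset_def Vset_def by auto
qed

lemma Tset_count:
  "finite (Tset a b :: ('n::finite \<Rightarrow> int) set) \<and>
   card (Tset a b :: ('n::finite \<Rightarrow> int) set) =
     (\<Sum>j\<le>CARD('n). (CARD('n) choose j) * ((a choose j) * ((b + (CARD('n) - j)) choose (CARD('n) - j))))"
proof -
  let ?A = "\<lambda>J::'n set. gmap J ` (Pset J a \<times> Vset (-J) b)"
  have inj: "inj_on (gmap J) (Pset J a \<times> Vset (-J) b)" for J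
    by (rule inj_on_inverseI[where g="\<lambda>f. ((\<lambda>i. nat (f i)), (\<lambda>i. nat (- f i)))"])
       (simp add: gmap_nat)
  have cardA: "finite (?A J) \<and> card (?A J) = (a choose card J) * ((b + (CARD('n) - card J)) choose (CARD('n) - card J))" for J
    using Pset_count[of J a] Vset_count[of "-J" b] card_image[OF inj[of J]]
    by (simp add: card_cartesian_product card_Compl_finite)
  have disj: "\<forall>J\<in>UNIV. \<forall>K\<in>UNIV. J \<noteq> K \<longrightarrow> ?A J \<inter> ?A K = {}"
  proof (intro ballI impI)
    fix J K :: "'n set" assume "J \<noteq> K"
    show "?A J \<inter> ?A K = {}"
    proof (rule ccontr)
      assume "\<not> ?thesis"
      then obtain p q where "p \<in> Pset J a \<times> Vset (-J) b" "q \<in> Pset K a \<times> Vset (-K) b" "gmap J p = gmap K q"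
        by blast
      then have "J = K" using gmap_nat(3) by metis
      then show False using \<open>J \<noteq> K\<close> by simp
    qed
  qed
  have fin: "finite (Tset a b :: ('n \<Rightarrow> int) set)" unfolding Tset_eq using cardA by auto
  have "card (Tset a b :: ('n \<Rightarrow> int) set) = (\<Sum>J\<in>UNIV. card (?A J))"
    unfolding Tset_eq by (rule card_UN_disjoint) (use cardA disj in auto)
  also have "\<dots> = (\<Sum>J\<in>(UNIV::'n set set). (\<lambda>j. (a choose j) * ((b + (CARD('n) - j)) choose (CARD('n) - j))) (card J))"
    using cardA by simp
  also have "\<dots> = (\<Sum>j\<le>CARD('n). (\<Sum>J\<in>{J::'n set. J \<in> UNIV \<and> card J = j}. (\<lambda>j. (a choose j) * ((b + (CARD('n) - j)) choose (CARD('n) - j))) (card J)))"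
    by (rule sum.group[symmetric]) (auto simp: card_mono)
  also have "\<dots> = (\<Sum>j\<le>CARD('n). (CARD('n) choose j) * ((a choose j) * ((b + (CARD('n) - j)) choose (CARD('n) - j))))"
  proof (intro sum.cong refl)
    fix j
    have "card {J::'n set. J \<in> UNIV \<and> card J = j} = CARD('n) choose j"
      using n_subsets[of "UNIV::'n set" j] by simp
    then show "(\<Sum>J\<in>{J::'n set. J \<in> UNIV \<and> card J = j}. (\<lambda>j. (a choose j) * ((b + (CARD('n) - j)) choose (CARD('n) - j))) (card J)) =
         (CARD('n) choose j) * ((a choose j) * ((b + (CARD('n) - j)) choose (CARD('n) - j)))"
      by simp
  qed
  finally show ?thesis using fin by simp
qed



lemma negligible_hyper_cart: "negligible {x::real^'n. x$k = d}"
proof -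
  have "negligible {x::real^'n. x \<bullet> axis k 1 = d}"
    by (rule negligible_standard_hyperplane) simp
  then show ?thesis by (simp add: cart_eq_inner_axis)
qed

definition hc :: "real^'n" where "hc = (\<chi> i. 1/2)"

lemma cube_measure: "measure lebesgue (cbox (y - hc) (y + (hc::real^'n))) = 1"
proof -
  have ne: "cbox (y - hc) (y + hc) \<noteq> {}"
  proof -
    have "y \<in> cbox (y - hc) (y + hc)" by (simp add: mem_box_cart hc_def)
    then show ?thesis by auto
  qed
  have "measure lebesgue (cbox (y - hc) (y + hc)) = measure lborel (cbox (y - hc) (y + hc))" by simp
  also have "\<dots> = prod (\<lambda>i. (y + hc)$i - (y - hc)$i) UNIV" by (rule content_cbox_cart[OF ne])
  also have "\<dots> = 1" by (simp add: hc_def)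
  finally show ?thesis .
qed

lemma int_less_imp: "a \<in> \<int> \<Longrightarrow> b \<in> \<int> \<Longrightarrow> a < (b::real) \<Longrightarrow> a + 1 \<le> b"
  by (metis Ints_cases of_int_1 of_int_add of_int_le_iff of_int_less_iff zless_imp_add1_zle)

lemma cube_inter_negligible:
  fixes y z :: "real^'n"
  assumes "\<forall>i. y$i \<in> \<int>" "\<forall>i. z$i \<in> \<int>" "y \<noteq> z"
  shows "negligible (cbox (y - hc) (y + hc) \<inter> cbox (z - hc) (z + hc))"
proof -
  obtain k where k: "y$k \<noteq> z$k" using assms(3) by (auto simp: vec_eq_iff)
  show ?thesis
  proof (cases "y$k < z$k")
    case True
    then have "y$k + 1 \<le> z$k" using int_less_imp assms by blast
    have "cbox (y - hc) (y + hc) \<inter> cbox (z - hc) (z + hc) \<subseteq> {x. x$k = y$k + 1/2}"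
    proof
      fix x assume "x \<in> cbox (y - hc) (y + hc) \<inter> cbox (z - hc) (z + hc)"
      then have "x \<in> cbox (y - hc) (y + hc)" "x \<in> cbox (z - hc) (z + hc)" by auto
      then have "x$k \<le> (y + hc)$k" "(z - hc)$k \<le> x$k" unfolding mem_box_cart by blast+
      then have "x$k \<le> y$k + 1/2" "z$k - 1/2 \<le> x$k" by (simp_all add: hc_def)
      then show "x \<in> {x. x$k = y$k + 1/2}" using \<open>y$k + 1 \<le> z$k\<close> by simp
    qed
    then show ?thesis using negligible_subset negligible_hyper_cart by blast
  next
    case False
    then have "z$k < y$k" using k by simp
    then have "z$k + 1 \<le> y$k" using int_less_imp assms by blast
    have "cbox (y - hc) (y + hc) \<inter> cbox (z - hc) (z + hc) \<subseteq> {x. x$k = z$k + 1/2}"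
    proof
      fix x assume "x \<in> cbox (y - hc) (y + hc) \<inter> cbox (z - hc) (z + hc)"
      then have "x \<in> cbox (z - hc) (z + hc)" "x \<in> cbox (y - hc) (y + hc)" by auto
      then have "x$k \<le> (z + hc)$k" "(y - hc)$k \<le> x$k" unfolding mem_box_cart by blast+
      then have "x$k \<le> z$k + 1/2" "y$k - 1/2 \<le> x$k" by (simp_all add: hc_def)
      then show "x \<in> {x. x$k = z$k + 1/2}" using \<open>z$k + 1 \<le> y$k\<close> by simp
    qed
    then show ?thesis using negligible_subset negligible_hyper_cart by blast
  qed
qed

lemma measure_cube_set:
  fixes S :: "(real^'n) set"
  assumes "finite S" "\<forall>y\<in>S. \<forall>i. y$i \<in> \<int>"
  shows "measure lebesgue (cube_set S) = card S" "cube_set S \<in> lmeasurable"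
proof -
  have cs: "cube_set S = (\<Union>y\<in>S. cbox (y - hc) (y + hc))" unfolding cube_set_def hc_def by simp
  have "measure lebesgue (cube_set S) = (\<Sum>y\<in>S. measure lebesgue (cbox (y - hc) (y + hc)))"
    unfolding cs
  proof (rule measure_negligible_finite_Union_image[OF assms(1)])
    show "pairwise (\<lambda>y z. negligible (cbox (y - hc) (y + hc) \<inter> cbox (z - hc) (z + hc))) S"
      unfolding pairwise_def using cube_inter_negligible assms(2) by blast
  qed auto
  then show "measure lebesgue (cube_set S) = card S" by (simp add: cube_measure)
  show "cube_set S \<in> lmeasurable" unfolding cs using assms(1) by (intro fmeasurable.finite_UN) auto
qed

definition phi :: "('n::finite \<Rightarrow> int) \<Rightarrow> real^'n" where
  "phi f = (\<chi> i. real_of_int (f i))"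

definition pp :: "real^'n \<Rightarrow> real" where "pp x = (\<Sum>i\<in>UNIV. max (x$i) 0)"
definition nn :: "real^'n \<Rightarrow> real" where "nn x = (\<Sum>i\<in>UNIV. max (- x$i) 0)"
definition Q :: "real \<Rightarrow> (real^'n) set" where "Q t = {x. pp x \<le> t \<and> nn x \<le> t}"

lemma pos_sum_eq: "(\<Sum>i\<in>{i. x$i > 0}. x$i) = pp (x::real^'n)"
proof -
  have "(\<Sum>i\<in>{i. x$i > 0}. x$i) = (\<Sum>i\<in>{i\<in>UNIV. x$i > 0}. x$i)" by simp
  also have "\<dots> = (\<Sum>i\<in>UNIV. if x$i > 0 then x$i else 0)" by (rule sum.inter_filter) simp
  also have "\<dots> = pp x" unfolding pp_def by (intro sum.cong) auto
  finally show ?thesis .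
qed

lemma neg_sum_eq: "(\<Sum>i\<in>{i. x$i < 0}. \<bar>x$i\<bar>) = nn (x::real^'n)"
proof -
  have "(\<Sum>i\<in>{i. x$i < 0}. \<bar>x$i\<bar>) = (\<Sum>i\<in>{i\<in>UNIV. x$i < 0}. \<bar>x$i\<bar>)" by simp
  also have "\<dots> = (\<Sum>i\<in>UNIV. if x$i < 0 then \<bar>x$i\<bar> else 0)" by (rule sum.inter_filter) simp
  also have "\<dots> = nn x" unfolding nn_def by (intro sum.cong) auto
  finally show ?thesis .
qed

lemma S_ball_Q: "S_ball r = {x::real^'n. (\<forall>i. x$i \<in> \<int>) \<and> x \<in> Q (real r)}"
  unfolding S_ball_def S_set_def Q_def pos_sum_eq neg_sum_eq by auto

lemma pp_phi: "pp (phi f) = real (\<Sum>i\<in>UNIV. nat (f i))"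
  unfolding pp_def phi_def by (simp add: of_nat_sum) (intro sum.cong; auto)

lemma nn_phi: "nn (phi f) = real (\<Sum>i\<in>UNIV. nat (- f i))"
  unfolding nn_def phi_def by (simp add: of_nat_sum) (intro sum.cong; auto)

lemma S_ball_phi: "S_ball r = phi ` (Tset r r :: ('n::finite \<Rightarrow> int) set)"
proof (intro equalityI subsetI)
  fix x :: "real^'n" assume x: "x \<in> S_ball r"
  define f where "f = (\<lambda>i. \<lfloor>x$i\<rfloor>)"
  have "phi f = x" using x unfolding S_ball_Q f_def phi_def by (auto simp: vec_eq_iff)
  have "pp x \<le> real r" "nn x \<le> real r" using x unfolding S_ball_Q Q_def by auto
  then have "real (\<Sum>i\<in>UNIV. nat (f i)) \<le> real r" "real (\<Sum>i\<in>UNIV. nat (- f i)) \<le> real r"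
    using pp_phi[of f] nn_phi[of f] \<open>phi f = x\<close> by auto
  then have "f \<in> Tset r r" unfolding Tset_def by (simp only: of_nat_le_iff) simp
  then show "x \<in> phi ` Tset r r" using \<open>phi f = x\<close> by blast
next
  fix x :: "real^'n" assume "x \<in> phi ` Tset r r"
  then obtain f where f: "f \<in> Tset r r" "x = phi f" by auto
  have A: "(\<Sum>i\<in>UNIV. nat (f i)) \<le> r" "(\<Sum>i\<in>UNIV. nat (- f i)) \<le> r" using f(1) unfolding Tset_def by auto
  have "real (\<Sum>i\<in>UNIV. nat (f i)) \<le> real r" "real (\<Sum>i\<in>UNIV. nat (- f i)) \<le> real r"
    by (simp only: of_nat_le_iff A)+
  then have "pp x \<le> real r" "nn x \<le> real r" by (simp only: f(2) pp_phi nn_phi)+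
  moreover have "\<forall>i. x$i \<in> \<int>" unfolding f(2) phi_def by simp
  ultimately show "x \<in> S_ball r" unfolding S_ball_Q Q_def by simp
qed

lemma inj_phi: "inj phi"
  by (rule injI) (auto simp: phi_def vec_eq_iff fun_eq_iff)

lemma card_S_ball:
  "finite (S_ball r :: (real^'n) set) \<and>
   card (S_ball r :: (real^'n) set) =
    (\<Sum>j=0..min CARD('n) r. (CARD('n) choose j) * (r choose j) * ((r + CARD('n) - j) choose (CARD('n) - j)))"
proof -
  have "card (S_ball r :: (real^'n) set) = card (Tset r r :: ('n \<Rightarrow> int) set)"
    unfolding S_ball_phi by (rule card_image) (use inj_phi in \<open>auto intro: inj_on_subset\<close>)
  also have "\<dots> = (\<Sum>j\<le>CARD('n). (CARD('n) choose j) * ((r choose j) * ((r + (CARD('n) - j)) choose (CARD('n) - j))))"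
    using Tset_count by blast
  also have "\<dots> = (\<Sum>j=0..min CARD('n) r. (CARD('n) choose j) * (r choose j) * ((r + CARD('n) - j) choose (CARD('n) - j)))"
  proof (rule sum.mono_neutral_cong_right)
    show "finite {..CARD('n)}" by simp
    show "{0..min CARD('n) r} \<subseteq> {..CARD('n)}" by auto
    show "\<forall>i\<in>{..CARD('n)} - {0..min CARD('n) r}. (CARD('n) choose i) * ((r choose i) * ((r + (CARD('n) - i)) choose (CARD('n) - i))) = 0"
      by auto
    show "\<And>x. x \<in> {0..min CARD('n) r} \<Longrightarrow> (CARD('n) choose x) * ((r choose x) * ((r + (CARD('n) - x)) choose (CARD('n) - x))) =
         (CARD('n) choose x) * (r choose x) * ((r + CARD('n) - x) choose (CARD('n) - x))"
      by auto
  qed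
  moreover have "finite (S_ball r :: (real^'n) set)"
    unfolding S_ball_phi using Tset_count[where 'n='n] by blast
  ultimately show ?thesis by simp
qed



lemma max_comb:
  fixes u v a b :: real
  assumes "0 \<le> u" "0 \<le> v"
  shows "max (u * a + v * b) 0 \<le> u * max a 0 + v * max b 0"
proof -
  have "u * a \<le> u * max a 0" using assms by (intro mult_left_mono) auto
  moreover have "v * b \<le> v * max b 0" using assms by (intro mult_left_mono) auto
  moreover have "0 \<le> u * max a 0" "0 \<le> v * max b 0" using assms by auto
  ultimately show ?thesis by linarith
qed

lemma max_comb':
  fixes u v a b :: real
  assumes "0 \<le> u" "0 \<le> v"
  shows "max (- (u * a) - v * b) 0 \<le> u * max (- a) 0 + v * max (- b) 0"
  using max_comb[OF assms, of "-a" "-b"] by simp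

lemma comp_le_pp: "max (x$k) 0 \<le> pp (x::real^'n)"
  unfolding pp_def by (rule member_le_sum[of k UNIV "\<lambda>i. max (x$i) 0"]) auto

lemma comp_le_nn: "max (- x$k) 0 \<le> nn (x::real^'n)"
  unfolding nn_def by (rule member_le_sum[of k UNIV "\<lambda>i. max (- x$i) 0"]) auto

lemma convex_Q: "convex (Q t :: (real^'n) set)"
proof (rule convexI)
  fix x y :: "real^'n" and u v :: real
  assume xy: "x \<in> Q t" "y \<in> Q t" and uv: "0 \<le> u" "0 \<le> v" "u + v = 1"
  have "pp (u *\<^sub>R x + v *\<^sub>R y) \<le> (\<Sum>i\<in>UNIV. u * max (x$i) 0 + v * max (y$i) 0)"
    unfolding pp_def using max_comb[OF uv(1,2)] by (intro sum_mono) simp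
  also have "\<dots> = u * pp x + v * pp y" unfolding pp_def by (simp add: sum.distrib sum_distrib_left)
  also have "\<dots> \<le> u * t + v * t" using xy uv unfolding Q_def
    by (intro add_mono mult_left_mono) auto
  finally have 1: "pp (u *\<^sub>R x + v *\<^sub>R y) \<le> t" using uv by (simp add: distrib_right[symmetric])
  have "nn (u *\<^sub>R x + v *\<^sub>R y) \<le> (\<Sum>i\<in>UNIV. u * max (- x$i) 0 + v * max (- y$i) 0)"
    unfolding nn_def using max_comb'[OF uv(1,2)] by (intro sum_mono) simp
  also have "\<dots> = u * nn x + v * nn y" unfolding nn_def by (simp add: sum.distrib sum_distrib_left)
  also have "\<dots> \<le> u * t + v * t" using xy uv unfolding Q_def
    by (intro add_mono mult_left_mono) auto
  finally have 2: "nn (u *\<^sub>R x + v *\<^sub>R y) \<le> t" using uv by (simp add: distrib_right[symmetric])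
  show "u *\<^sub>R x + v *\<^sub>R y \<in> Q t" using 1 2 unfolding Q_def by simp
qed

definition Delta :: "(real^'n) set" where
  "Delta = {a. (\<forall>k. 0 \<le> a$k) \<and> (\<Sum>k\<in>UNIV. a$k) \<le> 1}"

lemma Basis_cart: "(Basis :: (real^'n) set) = range (\<lambda>k. axis k 1)"
  unfolding Basis_vec_def by auto

lemma sum_Basis_cart: "(\<Sum>i\<in>Basis. x \<bullet> i) = (\<Sum>k\<in>UNIV. (x::real^'n)$k)"
proof -
  have "inj (\<lambda>k::'n. axis k (1::real))" by (auto simp: inj_on_def axis_eq_axis)
  then show ?thesis unfolding Basis_cart by (simp add: sum.reindex inner_axis)
qed

lemma Delta_hull: "convex hull (insert 0 Basis) = (Delta :: (real^'n) set)"
proof -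
  have "convex hull (insert 0 Basis) = {x::real^'n. (\<forall>i\<in>Basis. 0 \<le> x\<bullet>i) \<and> sum (\<lambda>i. x\<bullet>i) Basis \<le> 1}"
    by (rule std_simplex)
  also have "\<dots> = Delta" unfolding Delta_def sum_Basis_cart by (auto simp: Basis_cart inner_axis)
  finally show ?thesis .
qed

lemma Delta_Q:
  fixes a b :: "real^'n"
  assumes "a \<in> Delta" "b \<in> Delta" "0 \<le> r"
  shows "r *\<^sub>R a + (-r) *\<^sub>R b \<in> Q r"
proof -
  have "pp (r *\<^sub>R a + (-r) *\<^sub>R b) \<le> (\<Sum>k\<in>UNIV. r * a$k)"
    unfolding pp_def using assms unfolding Delta_def
    by (intro sum_mono) (auto simp: mult_nonneg_nonneg)
  also have "\<dots> = r * (\<Sum>k\<in>UNIV. a$k)" by (simp add: sum_distrib_left)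
  also have "\<dots> \<le> r * 1" using assms unfolding Delta_def by (intro mult_left_mono) auto
  finally have 1: "pp (r *\<^sub>R a + (-r) *\<^sub>R b) \<le> r" by simp
  have "nn (r *\<^sub>R a + (-r) *\<^sub>R b) \<le> (\<Sum>k\<in>UNIV. r * b$k)"
    unfolding nn_def using assms unfolding Delta_def
    by (intro sum_mono) (auto simp: mult_nonneg_nonneg)
  also have "\<dots> = r * (\<Sum>k\<in>UNIV. b$k)" by (simp add: sum_distrib_left)
  also have "\<dots> \<le> r * 1" using assms unfolding Delta_def by (intro mult_left_mono) auto
  finally have 2: "nn (r *\<^sub>R a + (-r) *\<^sub>R b) \<le> r" by simp
  show ?thesis using 1 2 unfolding Q_def by simp
qed

lemma corner_int: "a \<in> insert 0 (Basis :: (real^'n) set) \<Longrightarrow> a$k \<in> \<int>"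
  unfolding Basis_cart by (auto simp: axis_def)

lemma conv_S_ball: "conv_set (S_ball r :: (real^'n::finite) set) = Q (real r)"
proof (rule equalityI)
  show "conv_set (S_ball r) \<subseteq> (Q (real r) :: (real^'n) set)"
    unfolding conv_set_def by (rule hull_minimal) (auto simp: S_ball_Q convex_Q)
next
  show "Q (real r) \<subseteq> conv_set (S_ball r :: (real^'n) set)"
  proof (cases "r = 0")
    case True
    have "Q 0 \<subseteq> {0::real^'n}"
    proof
      fix x :: "real^'n" assume "x \<in> Q 0"
      then have "pp x \<le> 0" "nn x \<le> 0" unfolding Q_def by auto
      then have "\<forall>k. max (x$k) 0 \<le> 0 \<and> max (- x$k) 0 \<le> 0"
        using comp_le_pp[of x] comp_le_nn[of x] by (meson order_trans)
      then show "x \<in> {0}" by (simp add: vec_eq_iff) (meson order.antisym)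
    qed
    have "(0::real^'n) \<in> S_ball 0" unfolding S_ball_Q Q_def pp_def nn_def by simp
    then have "(0::real^'n) \<in> convex hull (S_ball r)" using True by (simp add: hull_inc)
    have "Q (real r) \<subseteq> {0::real^'n}" using True \<open>Q 0 \<subseteq> {0::real^'n}\<close> by simp
    also have "\<dots> \<subseteq> conv_set (S_ball r)" unfolding conv_set_def
      using \<open>(0::real^'n) \<in> convex hull (S_ball r)\<close> by simp
    finally show ?thesis .
  next
    case False
    then have rpos: "real r > 0" by simp
    let ?A = "(\<lambda>v. real r *\<^sub>R v) ` insert 0 (Basis :: (real^'n) set)"
    let ?B = "(\<lambda>v. (- real r) *\<^sub>R v) ` insert 0 (Basis :: (real^'n) set)"
    have AB: "?A + ?B \<subseteq> S_ball r"
    proof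
      fix z assume "z \<in> ?A + ?B"
      then obtain a' b' where ab': "a' \<in> ?A" "b' \<in> ?B" "z = a' + b'" unfolding set_plus_def by blast
      then obtain a b where ab: "a \<in> insert 0 Basis" "b \<in> insert 0 Basis"
        and "a' = real r *\<^sub>R a" "b' = (- real r) *\<^sub>R b" by blast
      then have z: "z = real r *\<^sub>R a + (- real r) *\<^sub>R b" using ab' by simp
      have "a \<in> convex hull (insert 0 Basis)" "b \<in> convex hull (insert 0 Basis)"
        by (rule hull_inc[OF ab(1)], rule hull_inc[OF ab(2)])
      then have "a \<in> Delta" "b \<in> Delta" unfolding Delta_hull by auto
      then have "z \<in> Q (real r)" unfolding z by (intro Delta_Q) auto
      moreover have "\<forall>k. z$k \<in> \<int>"
      proof
        fix k
        have "a$k \<in> \<int>" "b$k \<in> \<int>" using corner_int[OF ab(1)] corner_int[OF ab(2)] by auto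
        then show "z$k \<in> \<int>" unfolding z by (simp add: Ints_add Ints_mult Ints_minus)
      qed
      ultimately show "z \<in> S_ball r" unfolding S_ball_Q by simp
    qed
    have "convex hull (?A + ?B) = (\<lambda>v. real r *\<^sub>R v) ` Delta + (\<lambda>v. (- real r) *\<^sub>R v) ` Delta"
      unfolding convex_hull_set_plus convex_hull_scaling Delta_hull ..
    moreover have "convex hull (?A + ?B) \<subseteq> conv_set (S_ball r)"
      unfolding conv_set_def using AB by (rule hull_mono)
    moreover have "(Q (real r) :: (real^'n) set) \<subseteq> (\<lambda>v. real r *\<^sub>R v) ` Delta + (\<lambda>v. (- real r) *\<^sub>R v) ` Delta"
    proof
      fix x :: "real^'n" assume x: "x \<in> Q (real r)"
      define a where "a = (\<chi> k. max (x$k) 0 / real r)"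
      define b where "b = (\<chi> k. max (- x$k) 0 / real r)"
      have "(\<Sum>k\<in>UNIV. a$k) = pp x / real r" unfolding a_def pp_def by (simp add: sum_divide_distrib)
      also have "\<dots> \<le> 1" using x rpos unfolding Q_def by simp
      finally have "a \<in> Delta" unfolding Delta_def a_def by simp
      have "(\<Sum>k\<in>UNIV. b$k) = nn x / real r" unfolding b_def nn_def by (simp add: sum_divide_distrib)
      also have "\<dots> \<le> 1" using x rpos unfolding Q_def by simp
      finally have "b \<in> Delta" unfolding Delta_def b_def by simp
      have "x = real r *\<^sub>R a + (- real r) *\<^sub>R b"
        unfolding a_def b_def using rpos by (auto simp: vec_eq_iff max_def)
      have "real r *\<^sub>R a + (- real r) *\<^sub>R b \<in> (\<lambda>v. real r *\<^sub>R v) ` Delta + (\<lambda>v. (- real r) *\<^sub>R v) ` Delta"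
        using \<open>a \<in> Delta\<close> \<open>b \<in> Delta\<close> by (intro set_plus_intro imageI)
      then show "x \<in> (\<lambda>v. real r *\<^sub>R v) ` Delta + (\<lambda>v. (- real r) *\<^sub>R v) ` Delta"
        using \<open>x = real r *\<^sub>R a + (- real r) *\<^sub>R b\<close> by (simp only:)
    qed
    ultimately show ?thesis by blast
  qed
qed



lemma max_half: "a \<le> b + 1/2 \<Longrightarrow> max a 0 \<le> max b 0 + (1/2::real)"
  unfolding max_def by auto

lemma max_scale: "0 \<le> (t::real) \<Longrightarrow> max (t * a) 0 = t * max a 0"
proof (cases "a \<le> 0")
  case True
  assume t: "0 \<le> t"
  then have "t * a \<le> 0" using True by (simp add: mult_nonneg_nonpos)
  then show ?thesis using True by simp
next
  case False
  assume t: "0 \<le> t"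
  then have "0 \<le> t * a" using False by simp
  then show ?thesis using False by simp
qed

definition stretch :: "real \<Rightarrow> real^'n \<Rightarrow> real^'n" where
  "stretch t x = (\<chi> k. t * x$k)"

lemma pp_stretch: "0 \<le> t \<Longrightarrow> pp (stretch t x) = t * pp (x::real^'n)"
  unfolding pp_def stretch_def by (simp add: max_scale sum_distrib_left)

lemma nn_stretch: "0 \<le> t \<Longrightarrow> nn (stretch t x) = t * nn (x::real^'n)"
  using max_scale[of t "- x$k" for k] unfolding nn_def stretch_def by (simp add: sum_distrib_left)

lemma Q_scale:
  assumes "0 < t"
  shows "(Q t :: (real^'n) set) = stretch t ` Q 1"
proof (intro equalityI subsetI)
  fix x :: "real^'n" assume x: "x \<in> Q t"
  define w where "w = stretch (1/t) x"
  have "pp w = pp x / t" "nn w = nn x / t" unfolding w_def using assms by (simp_all add: pp_stretch nn_stretch)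
  then have "w \<in> Q 1" using x assms unfolding Q_def by simp
  moreover have "stretch t w = x" unfolding w_def stretch_def using assms by (simp add: vec_eq_iff)
  ultimately show "x \<in> stretch t ` Q 1" by blast
next
  fix x :: "real^'n" assume "x \<in> stretch t ` Q 1"
  then obtain w where w: "w \<in> Q 1" "x = stretch t w" by auto
  then show "x \<in> Q t" using assms unfolding Q_def
    by (simp add: pp_stretch nn_stretch)
qed

lemma Q_bounded: "(Q t :: (real^'n) set) \<subseteq> cbox (\<chi> k. - \<bar>t\<bar>) (\<chi> k. \<bar>t\<bar>)"
proof
  fix x :: "real^'n" assume x: "x \<in> Q t"
  have "x$k \<le> \<bar>t\<bar> \<and> - \<bar>t\<bar> \<le> x$k" for k
  proof -
    have "x$k \<le> max (x$k) 0" "- x$k \<le> max (- x$k) 0" by auto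
    moreover have "max (x$k) 0 \<le> pp x" "max (- x$k) 0 \<le> nn x" by (rule comp_le_pp, rule comp_le_nn)
    ultimately show ?thesis using x unfolding Q_def by auto
  qed
  then show "x \<in> cbox (\<chi> k. - \<bar>t\<bar>) (\<chi> k. \<bar>t\<bar>)" unfolding mem_box_cart by simp
qed

lemma Q_lmeasurable: "(Q t :: (real^'n) set) \<in> lmeasurable"
  by (rule measurable_convex[OF convex_Q]) (rule bounded_subset[OF bounded_cbox Q_bounded])

lemma Q0: "(Q 0 :: (real^'n) set) \<subseteq> {0}"
proof
  fix x :: "real^'n" assume "x \<in> Q 0"
  then have "pp x \<le> 0" "nn x \<le> 0" unfolding Q_def by auto
  then have "\<forall>k. max (x$k) 0 \<le> 0 \<and> max (- x$k) 0 \<le> 0"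
    using comp_le_pp[of x] comp_le_nn[of x] by (meson order_trans)
  then show "x \<in> {0}" by (simp add: vec_eq_iff) (meson order.antisym)
qed

lemma measure_Q:
  assumes "0 \<le> t"
  shows "measure lebesgue (Q t :: (real^'n) set) = t ^ CARD('n) * measure lebesgue (Q 1 :: (real^'n) set)"
proof (cases "t = 0")
  case True
  have "negligible (Q 0 :: (real^'n) set)" using Q0 negligible_subset negligible_sing by metis
  then have "measure lebesgue (Q 0 :: (real^'n) set) = 0" by (rule negligible_imp_measure0)
  then show ?thesis using True by simp
next
  case False
  then have tpos: "0 < t" using assms by simp
  have eq: "(Q t :: (real^'n) set) = stretch t ` Q 1" by (rule Q_scale[OF tpos])
  have st: "(stretch t :: real^'n \<Rightarrow> real^'n) = (\<lambda>x. \<chi> k. t * x$k)" by (simp add: fun_eq_iff stretch_def)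
  have "measure lebesgue (Q t :: (real^'n) set) = measure lebesgue ((\<lambda>x. \<chi> k. t * x$k) ` (Q 1 :: (real^'n) set))"
    unfolding eq st ..
  also have "\<dots> = \<bar>prod (\<lambda>k::'n. t) UNIV\<bar> * measure lebesgue (Q 1 :: (real^'n) set)"
    by (rule measure_stretch[OF Q_lmeasurable])
  also have "\<dots> = t ^ CARD('n) * measure lebesgue (Q 1 :: (real^'n) set)"
    using tpos by simp
  finally show ?thesis .
qed

lemma cube_sub_Q: "cube_set (S_ball r :: (real^'n) set) \<subseteq> Q (real r + real CARD('n) / 2)"
proof
  fix z :: "real^'n" assume "z \<in> cube_set (S_ball r)"
  then obtain y where y: "y \<in> S_ball r" and z: "z \<in> cbox (y - hc) (y + hc)"
    unfolding cube_set_def hc_def by auto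
  have zk: "z$k \<le> y$k + 1/2 \<and> y$k - 1/2 \<le> z$k" for k
  proof -
    have "z$k \<le> (y + hc)$k" "(y - hc)$k \<le> z$k" using z unfolding mem_box_cart by blast+
    then show ?thesis by (simp add: hc_def)
  qed
  have "pp z \<le> (\<Sum>k\<in>UNIV. max (y$k) 0 + 1/2)" unfolding pp_def
    proof (intro sum_mono max_half)
      fix i show "z$i \<le> y$i + 1/2" using zk[of i] by linarith
    qed
  also have "\<dots> = pp y + real CARD('n) / 2" unfolding pp_def by (simp add: sum.distrib)
  finally have 1: "pp z \<le> pp y + real CARD('n) / 2" .
  have "nn z \<le> (\<Sum>k\<in>UNIV. max (- y$k) 0 + 1/2)" unfolding nn_def
    proof (intro sum_mono max_half)
      fix i show "- z$i \<le> - y$i + 1/2" using zk[of i] by linarith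
    qed
  also have "\<dots> = nn y + real CARD('n) / 2" unfolding nn_def by (simp add: sum.distrib)
  finally have 2: "nn z \<le> nn y + real CARD('n) / 2" .
  show "z \<in> Q (real r + real CARD('n) / 2)" using 1 2 y unfolding S_ball_Q Q_def by auto
qed

lemma Q_sub_cube: "Q (real r - real CARD('n) / 2) \<subseteq> cube_set (S_ball r :: (real^'n) set)"
proof
  fix x :: "real^'n" assume x: "x \<in> Q (real r - real CARD('n) / 2)"
  define y :: "real^'n" where "y = (\<chi> k. real_of_int (round (x$k)))"
  have yk: "\<bar>y$k - x$k\<bar> \<le> 1/2" for k unfolding y_def using of_int_round_abs_le by simp
  have "pp y \<le> (\<Sum>k\<in>UNIV. max (x$k) 0 + 1/2)" unfolding pp_def
    proof (intro sum_mono max_half)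
      fix i show "y$i \<le> x$i + 1/2" using yk[of i] by linarith
    qed
  also have "\<dots> = pp x + real CARD('n) / 2" unfolding pp_def by (simp add: sum.distrib)
  finally have 1: "pp y \<le> real r" using x unfolding Q_def by simp
  have "nn y \<le> (\<Sum>k\<in>UNIV. max (- x$k) 0 + 1/2)" unfolding nn_def
    proof (intro sum_mono max_half)
      fix i show "- y$i \<le> - x$i + 1/2" using yk[of i] by linarith
    qed
  also have "\<dots> = nn x + real CARD('n) / 2" unfolding nn_def by (simp add: sum.distrib)
  finally have 2: "nn y \<le> real r" using x unfolding Q_def by simp
  have "y \<in> S_ball r" using 1 2 unfolding S_ball_Q Q_def y_def by simp
  moreover have "x \<in> cbox (y - hc) (y + hc)" unfolding mem_box_cart
  proof
    fix i have "y$i - x$i \<le> 1/2 \<and> - (y$i - x$i) \<le> 1/2" using yk[of i] by (simp only: abs_le_iff)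
    then show "(y - hc)$i \<le> x$i \<and> x$i \<le> (y + hc)$i" unfolding hc_def by simp
  qed
  ultimately show "x \<in> cube_set (S_ball r)" unfolding cube_set_def hc_def by blast
qed



lemma binom_lim: "((\<lambda>r::nat. real ((r + c) choose k) / real r ^ k) \<longlongrightarrow> 1 / fact k) sequentially"
proof -
  let ?g = "\<lambda>r::nat. (\<Prod>i\<in>{0..<k}. 1 + (real c - real i) * (1 / real r)) / fact k"
  have "(?g \<longlongrightarrow> (\<Prod>i\<in>{0..<k}. 1 + (real c - real i) * 0) / fact k) sequentially"
    by (intro tendsto_divide tendsto_prod tendsto_add tendsto_mult tendsto_const lim_1_over_n) simp_all
  then have lim: "(?g \<longlongrightarrow> 1 / fact k) sequentially" by simp
  have ev: "eventually (\<lambda>r. ?g r = real ((r + c) choose k) / real r ^ k) sequentially"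
    using eventually_gt_at_top[of "0::nat"]
  proof (rule eventually_mono)
    fix r :: nat assume r: "0 < r"
    have "real ((r + c) choose k) / real r ^ k = ((\<Prod>i\<in>{0..<k}. real (r + c) - real i) / fact k) / (\<Prod>i\<in>{0..<k}. real r)"
      by (simp add: binomial_gbinomial gbinomial_prod_rev)
    also have "\<dots> = (\<Prod>i\<in>{0..<k}. (real (r + c) - real i) / real r) / fact k"
      by (simp add: prod_dividef)
    also have "\<dots> = ?g r"
      using r by (intro arg_cong[where f="\<lambda>x. x / fact k"] prod.cong refl) (simp add: field_simps)
    finally show "?g r = real ((r + c) choose k) / real r ^ k" by simp
  qed
  show ?thesis by (rule Lim_transform_eventually[OF lim ev])
qed

lemma vandermonde_fact:
  "(\<Sum>j\<le>m. real (m choose j) * (1 / fact j) * (1 / fact (m - j))) = real ((2*m) choose m) / fact m"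
proof -
  have "(\<Sum>j\<le>m. real (m choose j) * (1 / fact j) * (1 / fact (m - j))) = (\<Sum>j\<le>m. real ((m choose j)^2) / fact m)"
  proof (intro sum.cong refl)
    fix j assume "j \<in> {..m}"
    then have "real (m choose j) = fact m / (fact j * fact (m - j))" by (intro binomial_fact) simp
    then show "real (m choose j) * (1 / fact j) * (1 / fact (m - j)) = real ((m choose j)^2) / fact m"
      by (simp add: power2_eq_square field_simps)
  qed
  also have "\<dots> = real (\<Sum>j\<le>m. (m choose j)^2) / fact m" by (simp add: sum_divide_distrib)
  also have "\<dots> = real ((2*m) choose m) / fact m" by (simp only: choose_square_sum)
  finally show ?thesis .
qed

lemma card_S_ball_sum:
  "real (card (S_ball r :: (real^'n) set)) =
    (\<Sum>j\<le>CARD('n). real (CARD('n) choose j) * real (r choose j) * real ((r + (CARD('n) - j)) choose (CARD('n) - j)))"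
proof -
  have "card (S_ball r :: (real^'n) set) = card (Tset r r :: ('n \<Rightarrow> int) set)"
    unfolding S_ball_phi by (rule card_image) (use inj_phi in \<open>auto intro: inj_on_subset\<close>)
  also have "\<dots> = (\<Sum>j\<le>CARD('n). (CARD('n) choose j) * ((r choose j) * ((r + (CARD('n) - j)) choose (CARD('n) - j))))"
    using Tset_count by blast
  finally show ?thesis by (simp add: mult.assoc)
qed

lemma N_lim:
  "((\<lambda>r. real (card (S_ball r :: (real^'n) set)) / real r ^ CARD('n)) \<longlongrightarrow>
     real ((2*CARD('n)) choose CARD('n)) / fact CARD('n)) sequentially"
proof -
  let ?m = "CARD('n)"
  let ?g = "\<lambda>r::nat. (\<Sum>j\<le>?m. real (?m choose j) * (real ((r + 0) choose j) / real r ^ j) *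
                 (real ((r + (?m - j)) choose (?m - j)) / real r ^ (?m - j)))"
  have "(?g \<longlongrightarrow> (\<Sum>j\<le>?m. real (?m choose j) * (1 / fact j) * (1 / fact (?m - j)))) sequentially"
    by (intro tendsto_sum tendsto_mult tendsto_const binom_lim)
  then have lim: "(?g \<longlongrightarrow> real ((2*?m) choose ?m) / fact ?m) sequentially"
    by (simp only: vandermonde_fact)
  have ev: "eventually (\<lambda>r. ?g r = real (card (S_ball r :: (real^'n) set)) / real r ^ ?m) sequentially"
    using eventually_gt_at_top[of "0::nat"]
  proof (rule eventually_mono)
    fix r :: nat assume r: "0 < r"
    have "real (card (S_ball r :: (real^'n) set)) / real r ^ ?m =
      (\<Sum>j\<le>?m. real (?m choose j) * real (r choose j) * real ((r + (?m - j)) choose (?m - j)) / real r ^ ?m)"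
      unfolding card_S_ball_sum by (simp add: sum_divide_distrib)
    also have "\<dots> = ?g r"
    proof (intro sum.cong refl)
      fix j assume "j \<in> {..?m}"
      then have "real r ^ ?m = real r ^ j * real r ^ (?m - j)" by (simp flip: power_add)
      then show "real (?m choose j) * real (r choose j) * real ((r + (?m - j)) choose (?m - j)) / real r ^ ?m =
         real (?m choose j) * (real ((r + 0) choose j) / real r ^ j) * (real ((r + (?m - j)) choose (?m - j)) / real r ^ (?m - j))"
        using r by simp
    qed
    finally show "?g r = real (card (S_ball r :: (real^'n) set)) / real r ^ ?m" by simp
  qed
  show ?thesis by (rule Lim_transform_eventually[OF lim ev])
qed



lemma cube_measure_S_ball:
  "measure lebesgue (cube_set (S_ball r :: (real^'n) set)) = real (card (S_ball r :: (real^'n) set))"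
  "cube_set (S_ball r :: (real^'n) set) \<in> lmeasurable"
proof -
  have fin: "finite (S_ball r :: (real^'n) set)" using card_S_ball by blast
  have int: "\<forall>y\<in>(S_ball r :: (real^'n) set). \<forall>i. y$i \<in> \<int>" unfolding S_ball_Q by auto
  show "measure lebesgue (cube_set (S_ball r :: (real^'n) set)) = real (card (S_ball r :: (real^'n) set))"
    by (rule measure_cube_set(1)[OF fin int])
  show "cube_set (S_ball r :: (real^'n) set) \<in> lmeasurable"
    by (rule measure_cube_set(2)[OF fin int])
qed

lemma V_eq: "measure lebesgue (Q 1 :: (real^'n) set) = real ((2*CARD('n)) choose CARD('n)) / fact CARD('n)"
proof -
  let ?m = "CARD('n)"
  let ?V = "measure lebesgue (Q 1 :: (real^'n) set)"
  let ?L = "real ((2*?m) choose ?m) / fact ?m"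
  let ?f = "\<lambda>r. real (card (S_ball r :: (real^'n) set)) / real r ^ ?m"
  let ?lo = "\<lambda>r::nat. (1 - (real ?m / 2) * (1 / real r)) ^ ?m * ?V"
  let ?hi = "\<lambda>r::nat. (1 + (real ?m / 2) * (1 / real r)) ^ ?m * ?V"
  have "(?lo \<longlongrightarrow> (1 - (real ?m / 2) * 0) ^ ?m * ?V) sequentially"
    by (intro tendsto_intros lim_1_over_n)
  then have lo: "(?lo \<longlongrightarrow> ?V) sequentially" by simp
  have "(?hi \<longlongrightarrow> (1 + (real ?m / 2) * 0) ^ ?m * ?V) sequentially"
    by (intro tendsto_intros lim_1_over_n)
  then have hi: "(?hi \<longlongrightarrow> ?V) sequentially" by simp
  have bounds: "eventually (\<lambda>r. ?lo r \<le> ?f r \<and> ?f r \<le> ?hi r) sequentially"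
    using eventually_ge_at_top[of "?m"]
  proof (rule eventually_mono)
    fix r assume rm: "?m \<le> r"
    have m1: "1 \<le> ?m" by (simp add: Suc_leI)
    then have "0 < r" using rm by linarith
    then have rpos: "0 < real r" by simp
    have rmpos: "0 < real r ^ ?m" using rpos by simp
    have N: "measure lebesgue (cube_set (S_ball r :: (real^'n) set)) = real (card (S_ball r :: (real^'n) set))"
      by (rule cube_measure_S_ball(1))
    have "real (card (S_ball r :: (real^'n) set)) \<le> measure lebesgue (Q (real r + real ?m / 2) :: (real^'n) set)"
      unfolding N[symmetric]
      by (rule measure_mono_fmeasurable[OF cube_sub_Q])
         (auto intro: fmeasurableD cube_measure_S_ball(2) Q_lmeasurable)
    also have "\<dots> = (real r + real ?m / 2) ^ ?m * ?V" by (rule measure_Q) simp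
    finally have up: "real (card (S_ball r :: (real^'n) set)) \<le> (real r + real ?m / 2) ^ ?m * ?V" .
    have "(real r - real ?m / 2) ^ ?m * ?V = measure lebesgue (Q (real r - real ?m / 2) :: (real^'n) set)"
      by (rule measure_Q[symmetric]) (use rm in simp)
    also have "\<dots> \<le> real (card (S_ball r :: (real^'n) set))"
      unfolding N[symmetric]
      by (rule measure_mono_fmeasurable[OF Q_sub_cube])
         (auto intro: fmeasurableD cube_measure_S_ball(2) Q_lmeasurable)
    finally have low: "(real r - real ?m / 2) ^ ?m * ?V \<le> real (card (S_ball r :: (real^'n) set))" .
    have e1: "1 - (real ?m / 2) * (1 / real r) = (real r - real ?m / 2) / real r" using rpos by (simp add: field_simps)
    have e2: "1 + (real ?m / 2) * (1 / real r) = (real r + real ?m / 2) / real r" using rpos by (simp add: field_simps)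
    have "?lo r = (real r - real ?m / 2) ^ ?m * ?V / real r ^ ?m" unfolding e1 by (simp add: power_divide)
    also have "\<dots> \<le> ?f r" using low rmpos by (intro divide_right_mono) auto
    finally have A: "?lo r \<le> ?f r" .
    have "?f r \<le> (real r + real ?m / 2) ^ ?m * ?V / real r ^ ?m" using up rmpos by (intro divide_right_mono) auto
    also have "\<dots> = ?hi r" unfolding e2 by (simp add: power_divide)
    finally have B: "?f r \<le> ?hi r" .
    show "?lo r \<le> ?f r \<and> ?f r \<le> ?hi r" using A B by simp
  qed
  have "?V \<le> ?L"
    by (rule tendsto_le[OF sequentially_bot N_lim lo]) (use bounds in \<open>auto elim: eventually_mono\<close>)
  moreover have "?L \<le> ?V"
    by (rule tendsto_le[OF sequentially_bot hi N_lim]) (use bounds in \<open>auto elim: eventually_mono\<close>)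
  ultimately show ?thesis by simp
qed



lemma conv_measure:
  "measure lebesgue (conv_set (S_ball r :: (real^'n) set)) =
     real r ^ CARD('n) * (real ((2*CARD('n)) choose CARD('n)) / fact CARD('n))"
proof -
  have "measure lebesgue (conv_set (S_ball r :: (real^'n) set)) = measure lebesgue (Q (real r) :: (real^'n) set)"
    by (simp only: conv_S_ball)
  also have "\<dots> = real r ^ CARD('n) * measure lebesgue (Q 1 :: (real^'n) set)" by (rule measure_Q) simp
  also have "\<dots> = real r ^ CARD('n) * (real ((2*CARD('n)) choose CARD('n)) / fact CARD('n))" by (simp only: V_eq)
  finally show ?thesis .
qed

theorem mainTheorem10:
  shows "(\<forall>r::nat.
      measure lebesgue (cube_set (S_ball r :: (real^'n) set)) =
        real (\<Sum>j=0..min CARD('n) r. (CARD('n) choose j) * (r choose j) * ((r + CARD('n) - j) choose (CARD('n) - j)))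
    \<and> measure lebesgue (conv_set (S_ball r :: (real^'n) set)) =
        real r ^ CARD('n) / fact CARD('n) * real ((2 * CARD('n)) choose CARD('n)))
    \<and> ((\<lambda>r::nat. measure lebesgue (conv_set (S_ball r :: (real^'n) set)) /
                  measure lebesgue (cube_set (S_ball r :: (real^'n) set))) \<longlonglongrightarrow> 1)"
proof (intro conjI allI)
  fix r :: nat
  show "measure lebesgue (cube_set (S_ball r :: (real^'n) set)) =
        real (\<Sum>j=0..min CARD('n) r. (CARD('n) choose j) * (r choose j) * ((r + CARD('n) - j) choose (CARD('n) - j)))"
    unfolding cube_measure_S_ball(1) using card_S_ball[of r, where 'n='n] by simp
  show "measure lebesgue (conv_set (S_ball r :: (real^'n) set)) =
        real r ^ CARD('n) / fact CARD('n) * real ((2 * CARD('n)) choose CARD('n))"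
    unfolding conv_measure by simp
next
  let ?m = "CARD('n)"
  let ?L = "real ((2*?m) choose ?m) / fact ?m"
  let ?f = "\<lambda>r. real (card (S_ball r :: (real^'n) set)) / real r ^ ?m"
  have Lpos: "?L \<noteq> 0" by simp
  have "((\<lambda>r. ?L / ?f r) \<longlongrightarrow> ?L / ?L) sequentially"
    by (rule tendsto_divide[OF tendsto_const N_lim Lpos])
  then have lim: "((\<lambda>r. ?L / ?f r) \<longlongrightarrow> 1) sequentially" using Lpos by simp
  have ev: "eventually (\<lambda>r. ?L / ?f r = measure lebesgue (conv_set (S_ball r :: (real^'n) set)) /
                  measure lebesgue (cube_set (S_ball r :: (real^'n) set))) sequentially"
    using eventually_gt_at_top[of "0::nat"]
  proof (rule eventually_mono)
    fix r :: nat assume "0 < r"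
    then have rp: "real r ^ ?m \<noteq> 0" by simp
    show "?L / ?f r = measure lebesgue (conv_set (S_ball r :: (real^'n) set)) /
                  measure lebesgue (cube_set (S_ball r :: (real^'n) set))"
      unfolding conv_measure cube_measure_S_ball(1) using rp by (simp add: field_simps)
  qed
  show "((\<lambda>r::nat. measure lebesgue (conv_set (S_ball r :: (real^'n) set)) /
                  measure lebesgue (cube_set (S_ball r :: (real^'n) set))) \<longlonglongrightarrow> 1)"
    by (rule Lim_transform_eventually[OF lim ev])
qed


end
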